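(* Let $\{x^k\}$ be generated by the ABP algorithm described in the context, and assume (A1)–(A7): (A1) $\mathcal F$ is continuously differentiable; (A2) $C$, $Q$ nonempty closed convex, $z_i^*>-\infty$ for each $i$; (A3) each $f_i$ convex; (A4) $\Omega\ne\emptyset$; (A5) $\lambda_k>0$, $\sum\lambda_k=\infty$, $\sum\lambda_k^2<\infty$; (A6) $0<\underline\alpha\le\alpha_k\le\bar\alpha$, $0<\underline\beta\le\beta_k\le\bar\beta$, $0<\underline\gamma\le\gamma_k\le\bar\gamma$ for all $k$; (A7) $\varphi_{\mathrm{lb}}=\varphi^*$. Then there exist a subsequence $\{k_j\}$ and a point $x^\infty\in\Omega$ with $x^{k_j}\to x^\infty$.
   Context: Let $n,m\ge1$, $\mathcal F=(f_1,\dots,f_m)\colon\mathbb R^n\to\mathbb R^m$, $C\subset\mathbb R^n$, $Q\subset\mathbb R^m$, $Q^+:=Q-\mathbb R^m_+=\{y-u:y\in Q,u\in\mathbb R^m_+\}$; $P_S$ is Euclidean projection onto a nonempty closed convex set $S$. Let $z_i^*:=\inf_{x\in C}f_i(x)$, fix $r$ with $r_i>0$, $\sum r_i=1$. Define $\varphi(x):=\max_ir_i(f_i(x)-z_i^* )$, $H(x):=\tfrac12\mathrm{dist}^2(x,C)$, $G(x):=\tfrac12\mathrm{dist}^2(\mathcal F(x),Q^+)$, $\mathcal S:=\{x:H(x)=0,G(x)=0\}$, $\varphi^*:=\inf_{\mathcal S}\varphi$, $\Omega:=\{x\in\mathcal S:\varphi(x)=\varphi^*\}$, $\varphi_{\mathrm{lb}}:=\inf_C\varphi$.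 ABP algorithm: given $x^0$, $\mu>0$, positive sequences $\{\alpha_k\},\{\beta_k\},\{\gamma_k\},\{\lambda_k\}$: $p^k:=P_{Q^+}(\mathcal F(x^k))$, $\rho^k:=\mathcal F(x^k)-p^k$, $z^k:=x^k-P_C(x^k)$, $v^k:=J_{\mathcal F}(x^k)^T\rho^k$, $w^k:=r_{i^*}\nabla f_{i^*}(x^k)$ with arbitrary $i^*\in\arg\max_ir_i(f_i(x^k)-z_i^* )$, $\Delta_k:=\varphi(x^k)-\varphi_{\mathrm{lb}}$, $d^k:=\alpha_k\mathbf 1_{\{\Delta_k\ge0\}}w^k+\beta_kz^k+\gamma_kv^k$, $\eta_k:=\max(\mu,\|d^k\|)$, $x^{k+1}:=x^k-(\lambda_k/\eta_k)d^k$. *)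

theory Defs
  imports "HOL-Analysis.Analysis"
begin

definition Qplus :: "(real^'m) set \<Rightarrow> (real^'m) set" where
  "Qplus Q = {y - u | y u. y \<in> Q \<and> (\<forall>i. 0 \<le> u $ i)}"

text \<open>Euclidean projection onto a set (closest point), applied to the closure
  so that it is the paper's P_S whenever S is closed.\<close>
definition proj :: "('a::euclidean_space) set \<Rightarrow> 'a \<Rightarrow> 'a" where
  "proj S x = closest_point (closure S) x"

definition zstar :: "(real^'n \<Rightarrow> real^'m) \<Rightarrow> (real^'n) set \<Rightarrow> 'm \<Rightarrow> real" where
  "zstar F C i = Inf ((\<lambda>x. F x $ i) ` C)"

definition phi :: "real^'m \<Rightarrow> (real^'n \<Rightarrow> real^'m) \<Rightarrow> (real^'n) set \<Rightarrow> real^'n \<Rightarrow> real" where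
  "phi r F C x = Max (range (\<lambda>i. r $ i * (F x $ i - zstar F C i)))"

definition Hfun :: "(real^'n) set \<Rightarrow> real^'n \<Rightarrow> real" where
  "Hfun C x = (1/2) * (infdist x C)\<^sup>2"

definition Gfun :: "(real^'n \<Rightarrow> real^'m) \<Rightarrow> (real^'m) set \<Rightarrow> real^'n \<Rightarrow> real" where
  "Gfun F Q x = (1/2) * (infdist (F x) (Qplus Q))\<^sup>2"

definition feas :: "(real^'n \<Rightarrow> real^'m) \<Rightarrow> (real^'n) set \<Rightarrow> (real^'m) set \<Rightarrow> (real^'n) set" where
  "feas F C Q = {x. Hfun C x = 0 \<and> Gfun F Q x = 0}"

definition phistar where
  "phistar r F C Q = Inf (phi r F C ` feas F C Q)"

definition Omega where
  "Omega r F C Q = {x \<in> feas F C Q. phi r F C x = phistar r F C Q}"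

definition philb where
  "philb r F C = Inf (phi r F C ` C)"

text \<open>One ABP step. g i x is the gradient of f_i at x; istar the chosen maximizing index.\<close>
definition abp_dir ::
  "real^'m \<Rightarrow> (real^'n \<Rightarrow> real^'m) \<Rightarrow> ('m \<Rightarrow> real^'n \<Rightarrow> real^'n) \<Rightarrow> (real^'n) set \<Rightarrow> (real^'m) set
   \<Rightarrow> 'm \<Rightarrow> real \<Rightarrow> real \<Rightarrow> real \<Rightarrow> real^'n \<Rightarrow> real^'n" where
  "abp_dir r F g C Q istar a b c x =
     (let p = proj (Qplus Q) (F x);
          \<rho> = F x - p;
          z = x - proj C x;
          v = (\<Sum>i\<in>UNIV. (\<rho> $ i) *\<^sub>R g i x);
          w = (r $ istar) *\<^sub>R g istar x;
          \<Delta> = phi r F C x - philb r F C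
      in (if \<Delta> \<ge> 0 then a else 0) *\<^sub>R w + b *\<^sub>R z + c *\<^sub>R v)"

end

theory Submission
  imports Defs "HOL-Analysis.Analysis"
begin

lemma grad_ineq:
  fixes f :: "'a::real_inner \<Rightarrow> real"
  assumes cv: "convex_on UNIV f" and dv: "(f has_derivative (\<lambda>h. G \<bullet> h)) (at x)"
  shows "f x + G \<bullet> (y - x) \<le> f y"
proof -
  define u where "u = y - x"
  define h where "h t = f (x + t *\<^sub>R u)" for t :: real
  have hc: "convex_on UNIV h"
  proof (rule convex_onI)
    fix s t a :: real assume a: "0 < a" "a < 1" "s \<in> UNIV" "t \<in> UNIV"
    have "x + ((1 - a) * s + a * t) *\<^sub>R u = (1 - a) *\<^sub>R (x + s *\<^sub>R u) + a *\<^sub>R (x + t *\<^sub>R u)"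
      by (simp add: algebra_simps)
    then show "h ((1 - a) *\<^sub>R s + a *\<^sub>R t) \<le> (1 - a) * h s + a * h t"
      unfolding h_def using convex_onD[OF cv, of a "x + s *\<^sub>R u" "x + t *\<^sub>R u"] a by simp
  qed simp
  have d1: "((\<lambda>t::real. x + t *\<^sub>R u) has_derivative (\<lambda>t. t *\<^sub>R u)) (at 0)"
    by (auto intro!: derivative_eq_intros)
  have dv0: "(f has_derivative (\<lambda>h. G \<bullet> h)) (at (x + 0 *\<^sub>R u))" using dv by simp
  have "(h has_derivative (\<lambda>t. G \<bullet> (t *\<^sub>R u))) (at 0)"
    unfolding h_def using diff_chain_at[OF d1 dv0] by (simp add: o_def)
  moreover have "(\<lambda>t. G \<bullet> (t *\<^sub>R u)) = (*) (G \<bullet> u)" by (auto simp: mult.commute)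
  ultimately have "(h has_field_derivative (G \<bullet> u)) (at 0 within UNIV)"
    by (simp add: has_field_derivative_def)
  from convex_on_imp_above_tangent[OF hc _ _ _ this, of 1] 
  have "h 1 - h 0 \<ge> G \<bullet> u" by simp
  then show ?thesis by (simp add: h_def u_def)
qed

fun pick :: "(nat \<Rightarrow> nat \<Rightarrow> bool) \<Rightarrow> nat \<Rightarrow> nat" where
  "pick P 0 = (SOME k. P 0 k)"
| "pick P (Suc j) = (SOME k. k > pick P j \<and> P (Suc j) k)"

lemma pick_props:
  assumes "\<And>j N. \<exists>k\<ge>N. P j k"
  shows "strict_mono (pick P)" "\<And>j. P j (pick P j)"
proof -
  have A: "pick P (Suc j) > pick P j \<and> P (Suc j) (pick P (Suc j))" for j
  proof -
    obtain k where "k \<ge> Suc (pick P j)" "P (Suc j) k" using assms by blast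
    then have "\<exists>k. k > pick P j \<and> P (Suc j) k" by (metis Suc_le_eq)
    then show ?thesis by (simp, rule someI_ex)
  qed
  show "strict_mono (pick P)" using A by (intro strict_monoI_Suc) auto
  show "P j (pick P j)" for j
  proof (cases j)
    case 0
    have "\<exists>k. P 0 k" using assms by blast
    then show ?thesis using 0 someI_ex[of "P 0"] by simp
  next
    case (Suc i) then show ?thesis using A by blast
  qed
qed


lemma Qplus_facts:
  fixes Q :: "(real^'m) set"
  assumes "Q \<noteq> {}" "convex Q"
  shows "closure (Qplus Q) \<noteq> {}" "convex (closure (Qplus Q))" "closed (closure (Qplus Q))"
    and "\<And>p j. p \<in> closure (Qplus Q) \<Longrightarrow> p - axis j 1 \<in> closure (Qplus Q)"
proof -
  obtain q where q: "q \<in> Q" using assms by auto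
  have "q - 0 \<in> Qplus Q" unfolding Qplus_def using q by force
  then show "closure (Qplus Q) \<noteq> {}" using closure_subset by auto
  have "convex (Qplus Q)"
    unfolding convex_def
  proof (intro ballI allI impI)
    fix a b :: "real^'m" and s t :: real
    assume a: "a \<in> Qplus Q" and b: "b \<in> Qplus Q" and st: "0 \<le> s" "0 \<le> t" "s + t = 1"
    obtain y1 u1 where 1: "a = y1 - u1" "y1 \<in> Q" "\<forall>i. 0 \<le> u1 $ i" using a unfolding Qplus_def by auto
    obtain y2 u2 where 2: "b = y2 - u2" "y2 \<in> Q" "\<forall>i. 0 \<le> u2 $ i" using b unfolding Qplus_def by auto
    have "s *\<^sub>R a + t *\<^sub>R b = (s *\<^sub>R y1 + t *\<^sub>R y2) - (s *\<^sub>R u1 + t *\<^sub>R u2)"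
      unfolding 1(1) 2(1) by (simp add: algebra_simps)
    moreover have "s *\<^sub>R y1 + t *\<^sub>R y2 \<in> Q" using assms(2) 1 2 st unfolding convex_def by blast
    moreover have "\<forall>i. 0 \<le> (s *\<^sub>R u1 + t *\<^sub>R u2) $ i" using 1 2 st by simp
    ultimately show "s *\<^sub>R a + t *\<^sub>R b \<in> Qplus Q" unfolding Qplus_def by blast
  qed
  then show "convex (closure (Qplus Q))" by (rule convex_closure)
  show "closed (closure (Qplus Q))" by simp
  fix p j assume p: "p \<in> closure (Qplus Q)"
  have sub: "(\<lambda>p. p - axis j 1) ` (Qplus Q) \<subseteq> closure (Qplus Q)"
  proof
    fix z assume "z \<in> (\<lambda>p. p - axis j 1) ` (Qplus Q)"
    then obtain y u where "z = y - u - axis j 1" "y \<in> Q" "\<forall>i. 0 \<le> u $ i" unfolding Qplus_def by auto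
    then have "z = y - (u + axis j 1)" "\<forall>i. 0 \<le> (u + axis j 1) $ i"
      by (auto simp: axis_def)
    then have "z \<in> Qplus Q" unfolding Qplus_def using \<open>y \<in> Q\<close> by blast
    then show "z \<in> closure (Qplus Q)" using closure_subset by auto
  qed
  have "(\<lambda>p. p - axis j 1) ` closure (Qplus Q) \<subseteq> closure (Qplus Q)"
    by (rule image_closure_subset[OF _ _ sub]) (auto intro!: continuous_intros)
  then show "p - axis j 1 \<in> closure (Qplus Q)" using p by auto
qed

lemma key_ineq:
  fixes F :: "real^'n \<Rightarrow> real^'m" and g :: "'m \<Rightarrow> real^'n \<Rightarrow> real^'n"
  assumes deriv: "\<forall>i y. ((\<lambda>u. F u $ i) has_derivative (\<lambda>h. g i y \<bullet> h)) (at y)"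
    and cvx: "\<forall>i. convex_on UNIV (\<lambda>u. F u $ i)"
    and C: "closed C" "convex C" and Q: "Q \<noteq> {}" "convex Q"
    and xbC: "xb \<in> C" and xbQ: "F xb \<in> closure (Qplus Q)"
    and imax: "\<forall>j. r $ j * (F y $ j - zstar F C j) \<le> r $ i * (F y $ i - zstar F C i)"
    and phixb: "phi r F C xb = philb r F C"
    and abc: "0 \<le> a" "0 \<le> b" "0 \<le> c" and rpos: "0 \<le> r $ i"
  shows "(if phi r F C y \<ge> philb r F C then a * (phi r F C y - philb r F C) else 0)
          + b * (norm (y - proj C y))\<^sup>2 + c * (norm (F y - proj (Qplus Q) (F y)))\<^sup>2
         \<le> abp_dir r F g C Q i a b c y \<bullet> (y - xb)"
proof -
  define P where "P = closure (Qplus Q)"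
  note PF = Qplus_facts[OF Q, folded P_def]
  define p where "p = proj (Qplus Q) (F y)"
  have p: "p = closest_point P (F y)" unfolding p_def proj_def P_def ..
  define \<rho> where "\<rho> = F y - p"
  define pc where "pc = proj C y"
  have pc: "pc = closest_point C y" unfolding pc_def proj_def using C closure_closed by simp
  define z where "z = y - pc"
  define v where "v = (\<Sum>i\<in>UNIV. (\<rho> $ i) *\<^sub>R g i y)"
  define w where "w = (r $ i) *\<^sub>R g i y"
  define A where "A = (if phi r F C y - philb r F C \<ge> 0 then a else 0)"
  have d: "abp_dir r F g C Q i a b c y = A *\<^sub>R w + b *\<^sub>R z + c *\<^sub>R v"
    unfolding abp_dir_def Let_def A_def w_def z_def v_def \<rho>_def p_def pc_def by simp
  have "abp_dir r F g C Q i a b c y \<bullet> (y - xb) = A * (w \<bullet> (y - xb)) + b * (z \<bullet> (y - xb)) + c * (v \<bullet> (y - xb))"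
    unfolding d by (simp add: inner_add_left)
  have phiy: "phi r F C y = r $ i * (F y $ i - zstar F C i)"
    unfolding phi_def by (rule Max_eqI) (use imax in auto)
  have phixb_ge: "r $ i * (F xb $ i - zstar F C i) \<le> phi r F C xb"
    unfolding phi_def by (rule Max_ge) auto
  have gi: "F y $ i + g i y \<bullet> (xb - y) \<le> F xb $ i"
    using grad_ineq[of "\<lambda>u. F u $ i" "g i y" y xb] deriv cvx by blast
  have "g i y \<bullet> (xb - y) = - (g i y \<bullet> (y - xb))" by (simp add: inner_diff_right)
  with gi have "F y $ i - F xb $ i \<le> g i y \<bullet> (y - xb)" by simp
  then have "r $ i * (F y $ i - F xb $ i) \<le> r $ i * (g i y \<bullet> (y - xb))"
    using rpos by (rule mult_left_mono)
  then have wge: "phi r F C y - philb r F C \<le> w \<bullet> (y - xb)"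
    using phiy phixb_ge phixb unfolding w_def by (simp add: algebra_simps)
  have pcC: "pc \<in> C" unfolding pc using closest_point_in_set[of C y] C xbC by auto
  have "(y - pc) \<bullet> (xb - pc) \<le> 0"
    by (rule any_closest_point_dot[OF C(2) C(1) pcC xbC]) 
       (use closest_point_exists(2)[of C y] C xbC pc in auto)
  moreover have "z \<bullet> (y - xb) = z \<bullet> z - (y - pc) \<bullet> (xb - pc)"
    unfolding z_def by (simp add: algebra_simps inner_diff_right inner_diff_left inner_commute)
  ultimately have zge: "(norm (y - pc))\<^sup>2 \<le> z \<bullet> (y - xb)" unfolding z_def
    by (simp add: power2_norm_eq_inner)
  have pP: "p \<in> P" unfolding p using closest_point_in_set PF by blast
  have pmin: "\<forall>z\<in>P. dist (F y) p \<le> dist (F y) z" unfolding p using closest_point_exists(2) PF by blast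
  have rho_nn: "0 \<le> \<rho> $ j" for j
  proof -
    have "(F y - p) \<bullet> ((p - axis j 1) - p) \<le> 0"
      by (rule any_closest_point_dot[OF PF(2) PF(3) pP PF(4)[OF pP] pmin])
    then show ?thesis unfolding \<rho>_def by (simp add: inner_axis)
  qed
  have "v \<bullet> (y - xb) = (\<Sum>j\<in>UNIV. \<rho> $ j * (g j y \<bullet> (y - xb)))"
    unfolding v_def by (simp add: inner_sum_left)
  also have "\<dots> \<ge> (\<Sum>j\<in>UNIV. \<rho> $ j * (F y $ j - F xb $ j))"
  proof (rule sum_mono)
    fix j
    have gj: "F y $ j + g j y \<bullet> (xb - y) \<le> F xb $ j"
      using grad_ineq[of "\<lambda>u. F u $ j" "g j y" y xb] deriv cvx by blast
    have "g j y \<bullet> (xb - y) = - (g j y \<bullet> (y - xb))" by (simp add: inner_diff_right)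
    with gj have "F y $ j - F xb $ j \<le> g j y \<bullet> (y - xb)" by simp
    then show "\<rho> $ j * (F y $ j - F xb $ j) \<le> \<rho> $ j * (g j y \<bullet> (y - xb))"
      using rho_nn by (rule mult_left_mono)
  qed
  finally have v1: "\<rho> \<bullet> (F y - F xb) \<le> v \<bullet> (y - xb)"
    by (simp add: inner_vec_def)
  have "(F y - p) \<bullet> (F xb - p) \<le> 0"
    by (rule any_closest_point_dot[OF PF(2) PF(3) pP xbQ[folded P_def] pmin])
  moreover have "\<rho> \<bullet> (F y - F xb) = \<rho> \<bullet> \<rho> - (F y - p) \<bullet> (F xb - p)"
    unfolding \<rho>_def by (simp add: algebra_simps inner_diff_right inner_diff_left inner_commute)
  ultimately have vge: "(norm \<rho>)\<^sup>2 \<le> v \<bullet> (y - xb)" using v1 by (simp add: power2_norm_eq_inner)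
  have t1: "(if phi r F C y \<ge> philb r F C then a * (phi r F C y - philb r F C) else 0) \<le> A * (w \<bullet> (y - xb))"
    unfolding A_def using wge abc by (auto intro: mult_left_mono)
  have t2: "b * (norm (y - proj C y))\<^sup>2 \<le> b * (z \<bullet> (y - xb))"
    using zge abc pc_def by (auto intro: mult_left_mono)
  have t3: "c * (norm (F y - proj (Qplus Q) (F y)))\<^sup>2 \<le> c * (v \<bullet> (y - xb))"
    using vge abc p_def \<rho>_def by (auto intro: mult_left_mono)
  show ?thesis using t1 t2 t3 \<open>abp_dir r F g C Q i a b c y \<bullet> (y - xb) = _\<close> by linarith
qed


lemma dir_bound:
  fixes F :: "real^'n \<Rightarrow> real^'m" and g :: "'m \<Rightarrow> real^'n \<Rightarrow> real^'n"
  assumes G: "\<forall>j. norm (g j y) \<le> Gb" and Z: "norm (y - proj C y) \<le> Rz"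
    and R: "norm (F y - proj (Qplus Q) (F y)) \<le> Rr"
    and a: "0 \<le> a" "a \<le> ah" and b: "0 \<le> b" "b \<le> bh" and c: "0 \<le> c" "c \<le> ch"
    and ri: "0 \<le> r $ i" "r $ i \<le> 1"
  shows "norm (abp_dir r F g C Q i a b c y) \<le> ah * Gb + bh * Rz + ch * (real CARD('m) * (Rr * Gb))"
proof -
  define \<rho> where "\<rho> = F y - proj (Qplus Q) (F y)"
  define v where "v = (\<Sum>i\<in>UNIV. (\<rho> $ i) *\<^sub>R g i y)"
  define w where "w = (r $ i) *\<^sub>R g i y"
  define A where "A = (if phi r F C y - philb r F C \<ge> 0 then a else 0)"
  have d: "abp_dir r F g C Q i a b c y = A *\<^sub>R w + b *\<^sub>R (y - proj C y) + c *\<^sub>R v"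
    unfolding abp_dir_def Let_def A_def w_def v_def \<rho>_def by simp
  have Gb0: "0 \<le> Gb" using G norm_ge_zero order_trans by blast
  have Rz0: "0 \<le> Rz" using Z norm_ge_zero order_trans by blast
  have Rr0: "0 \<le> Rr" using R norm_ge_zero order_trans by blast
  have "norm w = r $ i * norm (g i y)" unfolding w_def using ri by simp
  also have "\<dots> \<le> 1 * Gb" using ri G by (intro mult_mono) auto
  finally have nw: "norm w \<le> Gb" by simp
  have nA: "\<bar>A\<bar> \<le> ah" "0 \<le> \<bar>A\<bar>" unfolding A_def using a by auto
  have "norm (A *\<^sub>R w) \<le> ah * Gb" using nA nw by (simp add: mult_mono Gb0)
  moreover have "norm (b *\<^sub>R (y - proj C y)) \<le> bh * Rz" using b Z by (simp add: mult_mono Rz0)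
  moreover have "norm v \<le> real CARD('m) * (Rr * Gb)"
  proof -
    have "norm v \<le> (\<Sum>j\<in>UNIV. norm ((\<rho> $ j) *\<^sub>R g j y))" unfolding v_def by (rule norm_sum)
    also have "\<dots> \<le> (\<Sum>j\<in>(UNIV::'m set). Rr * Gb)"
    proof (rule sum_mono)
      fix j
      have "\<bar>\<rho> $ j\<bar> \<le> Rr" using component_le_norm_cart[of \<rho> j] R \<rho>_def by simp
      then show "norm ((\<rho> $ j) *\<^sub>R g j y) \<le> Rr * Gb" using G by (simp add: mult_mono Rr0)
    qed
    finally show ?thesis by simp
  qed
  then have "norm (c *\<^sub>R v) \<le> ch * (real CARD('m) * (Rr * Gb))" using c Rr0 Gb0
    by (simp add: mult_mono)
  ultimately show ?thesis unfolding d
    by (smt (verit) norm_triangle_ineq)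
qed

theorem proposition6:
  fixes F :: "real^'n \<Rightarrow> real^'m"
    and g :: "'m \<Rightarrow> real^'n \<Rightarrow> real^'n"
    and C :: "(real^'n) set" and Q :: "(real^'m) set"
    and r :: "real^'m"
    and x :: "nat \<Rightarrow> real^'n" and istar :: "nat \<Rightarrow> 'm"
    and mu :: real
    and alpha beta gamma lam :: "nat \<Rightarrow> real"
    and alphalo alphahi betalo betahi gammalo gammahi :: real
  assumes r_pos: "\<forall>i. r $ i > 0" and r_sum: "(\<Sum>i\<in>UNIV. r $ i) = 1"
    and A1_deriv: "\<forall>i y. ((\<lambda>u. F u $ i) has_derivative (\<lambda>h. g i y \<bullet> h)) (at y)"
    and A1_cont: "\<forall>i. continuous_on UNIV (g i)"
    and A2_C: "C \<noteq> {}" "closed C" "convex C"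
    and A2_Q: "Q \<noteq> {}" "closed Q" "convex Q"
    and A2_z: "\<forall>i. bdd_below ((\<lambda>u. F u $ i) ` C)"
    and A3: "\<forall>i. convex_on UNIV (\<lambda>u. F u $ i)"
    and A4: "Omega r F C Q \<noteq> {}"
    and A5: "\<forall>k. lam k > 0" "\<not> summable lam" "summable (\<lambda>k. (lam k)\<^sup>2)"
    and A6: "0 < alphalo" "\<forall>k. alphalo \<le> alpha k \<and> alpha k \<le> alphahi"
            "0 < betalo" "\<forall>k. betalo \<le> beta k \<and> beta k \<le> betahi"
            "0 < gammalo" "\<forall>k. gammalo \<le> gamma k \<and> gamma k \<le> gammahi"
    and A7: "philb r F C = phistar r F C Q"
    and mu_pos: "mu > 0"
    and istar: "\<forall>k j. r $ j * (F (x k) $ j - zstar F C j)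
                        \<le> r $ istar k * (F (x k) $ istar k - zstar F C (istar k))"
    and iter: "\<forall>k. x (Suc k) = x k -
                 (lam k / max mu (norm (abp_dir r F g C Q (istar k) (alpha k) (beta k) (gamma k) (x k))))
                   *\<^sub>R abp_dir r F g C Q (istar k) (alpha k) (beta k) (gamma k) (x k)"
  shows "\<exists>s xinf. strict_mono s \<and> xinf \<in> Omega r F C Q \<and> (x \<circ> s) \<longlonglongrightarrow> xinf"
proof -
  obtain xb where xb: "xb \<in> Omega r F C Q" using A4 by auto
  have xbC: "xb \<in> C"
    using xb A2_C unfolding Omega_def feas_def Hfun_def by (simp add: in_closed_iff_infdist_zero)
  note PF = Qplus_facts[OF A2_Q(1) A2_Q(3)]
  have Qne: "Qplus Q \<noteq> {}" using PF(1) by auto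
  have xbQ: "F xb \<in> closure (Qplus Q)"
    using xb Qne unfolding Omega_def feas_def Gfun_def by (simp add: in_closure_iff_infdist_zero)
  have phixb: "phi r F C xb = philb r F C" using xb A7 unfolding Omega_def by simp
  have r1: "r $ j \<le> 1" for j
    using member_le_sum[of j UNIV "\<lambda>j. r $ j"] r_pos r_sum by (simp add: less_imp_le)
  define d where "d k = abp_dir r F g C Q (istar k) (alpha k) (beta k) (gamma k) (x k)" for k
  define t where "t k = lam k / max mu (norm (d k))" for k
  define q where "q k = d k \<bullet> (x k - xb)" for k
  define D where "D k = (norm (x k - xb))\<^sup>2" for k
  have KI: "(if phi r F C (x k) \<ge> philb r F C then alpha k * (phi r F C (x k) - philb r F C) else 0)
          + beta k * (norm (x k - proj C (x k)))\<^sup>2 + gamma k * (norm (F (x k) - proj (Qplus Q) (F (x k))))\<^sup>2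
         \<le> q k" for k
    unfolding q_def d_def
    by (rule key_ineq[OF A1_deriv A3 A2_C(2) A2_C(3) A2_Q(1) A2_Q(3) xbC xbQ _ phixb])
       (use istar A6 r_pos in \<open>auto intro: less_imp_le order_trans\<close>)
  have al: "0 < alpha k" "0 < beta k" "0 < gamma k" for k using A6 by (auto intro: less_le_trans)
  have T1: "0 \<le> (if phi r F C (x k) \<ge> philb r F C then alpha k * (phi r F C (x k) - philb r F C) else 0)" for k
    using al[of k] by (simp add: less_imp_le)
  have T2: "0 \<le> beta k * (norm (x k - proj C (x k)))\<^sup>2" for k using al by (simp add: less_imp_le)
  have T3: "0 \<le> gamma k * (norm (F (x k) - proj (Qplus Q) (F (x k))))\<^sup>2" for k using al by (simp add: less_imp_le)
  have qnn: "0 \<le> q k" for k using KI[of k] T1[of k] T2[of k] T3[of k] by linarith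
  have mx: "0 < max mu (norm (d k))" for k using mu_pos by simp
  have tpos: "0 < t k" for k unfolding t_def using A5(1) mx by simp
  have step: "D (Suc k) \<le> D k - 2 * t k * q k + (lam k)\<^sup>2" for k
  proof -
    have xs: "x (Suc k) - xb = (x k - xb) - t k *\<^sub>R d k" using iter unfolding d_def t_def by simp
    have nexp: "(norm (u - c *\<^sub>R v))\<^sup>2 = (norm u)\<^sup>2 - 2*c*(v \<bullet> u) + (c * norm v)\<^sup>2"
      for u v :: "real^'n" and c :: real
      unfolding power_mult_distrib power2_norm_eq_inner
      by (simp add: inner_diff_left inner_diff_right inner_commute algebra_simps power2_eq_square)
    have "D (Suc k) = D k - 2 * t k * q k + (t k * norm (d k))\<^sup>2"
      unfolding D_def q_def xs nexp ..
    moreover have "t k * norm (d k) \<le> lam k"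
    proof -
      have "t k * norm (d k) = lam k * (norm (d k) / max mu (norm (d k)))" unfolding t_def by simp
      also have "\<dots> \<le> lam k * 1" using A5(1) mx[of k]
        by (intro mult_left_mono) (auto simp: divide_le_eq_1 less_imp_le)
      finally show ?thesis by simp
    qed
    then have "(t k * norm (d k))\<^sup>2 \<le> (lam k)\<^sup>2" using tpos[of k]
      by (intro power_mono) auto
    ultimately show ?thesis by linarith
  qed
  define B where "B = D 0 + suminf (\<lambda>k. (lam k)\<^sup>2)"
  have cum: "D n + 2 * (\<Sum>k<n. t k * q k) \<le> D 0 + (\<Sum>k<n. (lam k)\<^sup>2)" for n
  proof (induction n)
    case 0 then show ?case by simp
  next
    case (Suc n) then show ?case using step[of n] by simp
  qed
  have sl: "(\<Sum>k<n. (lam k)\<^sup>2) \<le> suminf (\<lambda>k. (lam k)\<^sup>2)" for n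
    by (rule sum_le_suminf[OF A5(3)]) auto
  have D0: "0 \<le> D k" for k unfolding D_def by simp
  have tq0: "0 \<le> (\<Sum>k<n. t k * q k)" for n using tpos qnn by (intro sum_nonneg) (simp add: less_imp_le)
  have DB: "D n \<le> B" for n using cum[of n] sl[of n] tq0[of n] unfolding B_def by linarith
  have tqB: "(\<Sum>k<n. t k * q k) \<le> B / 2" for n
  proof -
    have "2 * (\<Sum>k<n. t k * q k) \<le> B" using cum[of n] sl[of n] D0[of n] unfolding B_def by linarith
    then show ?thesis by simp
  qed
  define R where "R = sqrt B"
  have xR: "norm (x k - xb) \<le> R" for k
    unfolding R_def using real_sqrt_le_mono[OF DB[of k]] by (simp add: D_def)
  have xK: "x k \<in> cball xb R" for k using xR[of k] by (simp add: dist_norm norm_minus_commute)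
  have bG: "bounded (\<Union>j. g j ` cball xb R)"
    by (rule bounded_UN) (auto intro!: compact_imp_bounded compact_continuous_image
        continuous_on_subset[OF A1_cont[rule_format]])
  then obtain Gb where Gb: "\<And>j y. y \<in> cball xb R \<Longrightarrow> norm (g j y) \<le> Gb"
    unfolding bounded_iff by blast
  have compcont: "continuous_on UNIV (\<lambda>u. F u $ i)" for i
    by (rule has_derivative_continuous_on) (use A1_deriv in auto)
  have Feq: "F = (\<lambda>u. \<chi> i. F u $ i)" by (simp add: vec_eq_iff)
  have contF: "continuous_on UNIV F" by (subst Feq) (intro continuous_on_vec_lambda compcont)
  have "bounded (F ` cball xb R)"
    by (auto intro!: compact_imp_bounded compact_continuous_image continuous_on_subset[OF contF])
  then obtain Fb where Fb: "\<And>y. y \<in> cball xb R \<Longrightarrow> norm (F y) \<le> Fb"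
    unfolding bounded_iff by blast
  have pcC: "proj C y = closest_point C y" for y unfolding proj_def using A2_C closure_closed by simp
  have bz: "norm (x k - proj C (x k)) \<le> R" for k
    using closest_point_le[OF A2_C(2) xbC, of "x k"] xR[of k] pcC by (simp add: dist_norm)
  have br: "norm (F (x k) - proj (Qplus Q) (F (x k))) \<le> Fb + norm (F xb)" for k
  proof -
    have "norm (F (x k) - proj (Qplus Q) (F (x k))) \<le> norm (F (x k) - F xb)"
      using closest_point_le[OF PF(3) xbQ, of "F (x k)"] by (simp add: proj_def dist_norm)
    also have "\<dots> \<le> norm (F (x k)) + norm (F xb)" by (rule norm_triangle_ineq4)
    finally show ?thesis using Fb[OF xK[of k]] by simp
  qed
  define Mb where "Mb = alphahi * Gb + betahi * R + gammahi * (real CARD('m) * ((Fb + norm (F xb)) * Gb))"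
  have dB: "norm (d k) \<le> Mb" for k
    unfolding d_def Mb_def
    by (rule dir_bound[where F=F and y="x k" and C=C and Q=Q and g=g, OF _ bz[of k] br[of k]]) (use Gb xK A6 al r_pos r1 in \<open>auto intro: less_imp_le\<close>)
  define M where "M = max mu Mb"
  have Mpos: "0 < M" unfolding M_def using mu_pos by simp
  have lq: "lam k * q k \<le> M * (t k * q k)" for k
  proof -
    have "lam k = t k * max mu (norm (d k))" unfolding t_def using mx[of k] by simp
    also have "\<dots> \<le> t k * M" unfolding M_def using dB[of k] tpos[of k]
      by (intro mult_left_mono) auto
    finally have "lam k * q k \<le> (t k * M) * q k" using qnn[of k] by (rule mult_right_mono)
    then show ?thesis by (simp add: algebra_simps)
  qed
  have summ: "summable (\<lambda>k. lam k * q k)"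
  proof (rule summableI_nonneg_bounded[where x = "M * (B / 2)"])
    show "0 \<le> lam k * q k" for k using A5(1) qnn by (simp add: less_imp_le)
    fix n
    have "(\<Sum>k<n. lam k * q k) \<le> (\<Sum>k<n. M * (t k * q k))" by (rule sum_mono) (rule lq)
    also have "\<dots> = M * (\<Sum>k<n. t k * q k)" by (simp add: sum_distrib_left)
    also have "\<dots> \<le> M * (B / 2)" using tqB Mpos by (intro mult_left_mono) auto
    finally show "(\<Sum>k<n. lam k * q k) \<le> M * (B / 2)" .
  qed
  have io: "\<exists>k\<ge>N. q k < e" if e: "0 < e" for N e
  proof (rule ccontr)
    assume "\<not> ?thesis"
    then have ge: "\<And>k. k \<ge> N \<Longrightarrow> e \<le> q k" by force
    have "summable lam"
    proof (rule summable_comparison_test'[where g = "\<lambda>k. lam k * q k / e" and N = N])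
      show "summable (\<lambda>k. lam k * q k / e)" using summ by (rule summable_divide)
      fix k assume "N \<le> k"
      then have "lam k * e \<le> lam k * q k" using ge A5(1) by (simp add: less_imp_le mult_left_mono)
      then show "norm (lam k) \<le> lam k * q k / e" using e A5(1) by (simp add: le_divide_eq less_imp_le)
    qed
    then show False using A5(2) by simp
  qed
  define PP where "PP j k = (q k < inverse (real (Suc j)))" for j k
  have PPex: "\<exists>k\<ge>N. PP j k" for j N unfolding PP_def by (rule io) simp
  note pk = pick_props[of PP, OF PPex]
  define s0 where "s0 = pick PP"
  have "bounded (range (x \<circ> s0))"
    by (rule bounded_subset[OF bounded_cball[of xb R]]) (use xK in auto)
  then obtain l rr where rr: "strict_mono rr" and lim0: "((x \<circ> s0) \<circ> rr) \<longlonglongrightarrow> l"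
    using bounded_imp_convergent_subsequence by blast
  define s where "s = s0 \<circ> rr"
  have smono: "strict_mono s" unfolding s_def s0_def using pk(1) rr by (rule strict_mono_o)
  have xs: "(\<lambda>j. x (s j)) \<longlonglongrightarrow> l" using lim0 by (simp add: s_def o_def)
  have qsm: "q (s j) \<le> inverse (real (Suc j))" for j
  proof -
    have "q (s j) < inverse (real (Suc (rr j)))" using pk(2)[of "rr j"] unfolding s_def s0_def PP_def by simp
    also have "\<dots> \<le> inverse (real (Suc j))" using seq_suble[OF rr, of j] by (simp add: le_imp_inverse_le)
    finally show ?thesis by simp
  qed
  have qs: "(\<lambda>j. q (s j)) \<longlonglongrightarrow> 0"
    by (rule tendsto_sandwich[OF _ _ tendsto_const LIMSEQ_inverse_real_of_nat]) (use qnn qsm in auto)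
  have hq: "(infdist (x k) C)\<^sup>2 \<le> q k / betalo" for k
  proof -
    have "infdist (x k) C \<le> norm (x k - proj C (x k))"
      using infdist_le[OF closest_point_in_set[OF A2_C(2) A2_C(1)], of "x k" "x k"] pcC by (simp add: dist_norm)
    then have "(infdist (x k) C)\<^sup>2 \<le> (norm (x k - proj C (x k)))\<^sup>2" by (simp add: infdist_nonneg power_mono)
    moreover have "betalo * (norm (x k - proj C (x k)))\<^sup>2 \<le> beta k * (norm (x k - proj C (x k)))\<^sup>2"
      using A6 by (simp add: mult_right_mono)
    moreover have "beta k * (norm (x k - proj C (x k)))\<^sup>2 \<le> q k" using KI[of k] T1[of k] T3[of k] by linarith
    ultimately have "betalo * (infdist (x k) C)\<^sup>2 \<le> q k"
      by (smt (verit) A6(3) mult_left_mono)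
    then show ?thesis using A6(3) by (simp add: le_divide_eq mult.commute)
  qed
  have "(\<lambda>j. (infdist (x (s j)) C)\<^sup>2) \<longlonglongrightarrow> 0"
    by (rule tendsto_sandwich[where f = "\<lambda>j. 0" and h = "\<lambda>j. q (s j) / betalo"])
       (use hq qs in \<open>auto intro: tendsto_divide_zero\<close>)
  moreover have "(\<lambda>j. (infdist (x (s j)) C)\<^sup>2) \<longlonglongrightarrow> (infdist l C)\<^sup>2"
    by (intro tendsto_intros xs)
  ultimately have "(infdist l C)\<^sup>2 = 0" using LIMSEQ_unique by blast
  then have Hl: "Hfun C l = 0" unfolding Hfun_def by simp
  have lC: "l \<in> C" using \<open>(infdist l C)\<^sup>2 = 0\<close> A2_C by (simp add: in_closed_iff_infdist_zero)
  have gq: "(infdist (F (x k)) (closure (Qplus Q)))\<^sup>2 \<le> q k / gammalo" for k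
  proof -
    have "infdist (F (x k)) (closure (Qplus Q)) \<le> norm (F (x k) - proj (Qplus Q) (F (x k)))"
      using infdist_le[OF closest_point_in_set[OF PF(3) PF(1)], of "F (x k)" "F (x k)"]
      by (simp add: dist_norm proj_def)
    then have "(infdist (F (x k)) (closure (Qplus Q)))\<^sup>2 \<le> (norm (F (x k) - proj (Qplus Q) (F (x k))))\<^sup>2"
      by (simp add: infdist_nonneg power_mono)
    moreover have "gammalo * (norm (F (x k) - proj (Qplus Q) (F (x k))))\<^sup>2 \<le> gamma k * (norm (F (x k) - proj (Qplus Q) (F (x k))))\<^sup>2"
      using A6 by (simp add: mult_right_mono)
    moreover have "gamma k * (norm (F (x k) - proj (Qplus Q) (F (x k))))\<^sup>2 \<le> q k" using KI[of k] T1[of k] T2[of k] by linarith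
    ultimately have "gammalo * (infdist (F (x k)) (closure (Qplus Q)))\<^sup>2 \<le> q k"
      by (smt (verit) A6(5) mult_left_mono)
    then show ?thesis using A6(5) by (simp add: le_divide_eq mult.commute)
  qed
  have Fxs: "(\<lambda>j. F (x (s j))) \<longlonglongrightarrow> F l"
    using contF xs by (metis continuous_on_tendsto_compose UNIV_I eventually_sequentiallyI)
  have "(\<lambda>j. (infdist (F (x (s j))) (closure (Qplus Q)))\<^sup>2) \<longlonglongrightarrow> 0"
    by (rule tendsto_sandwich[where f = "\<lambda>j. 0" and h = "\<lambda>j. q (s j) / gammalo"])
       (use gq qs in \<open>auto intro: tendsto_divide_zero\<close>)
  moreover have "(\<lambda>j. (infdist (F (x (s j))) (closure (Qplus Q)))\<^sup>2) \<longlonglongrightarrow> (infdist (F l) (closure (Qplus Q)))\<^sup>2"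
    by (intro tendsto_intros Fxs)
  ultimately have "(infdist (F l) (closure (Qplus Q)))\<^sup>2 = 0" using LIMSEQ_unique by blast
  then have "F l \<in> closure (Qplus Q)" using PF by (simp add: in_closed_iff_infdist_zero)
  then have Gl: "Gfun F Q l = 0" unfolding Gfun_def using Qne by (simp add: in_closure_iff_infdist_zero)
  have lfeas: "l \<in> feas F C Q" unfolding feas_def using Hl Gl by simp
  have phige: "r $ j * (F y $ j - zstar F C j) \<le> phi r F C y" for y j
    unfolding phi_def by (rule Max_ge) auto
  have phiq: "phi r F C (x k) \<le> phi r F C xb + q k / alphalo" for k
  proof (cases "phi r F C (x k) \<ge> philb r F C")
    case True
    then have "alpha k * (phi r F C (x k) - philb r F C) \<le> q k" using KI[of k] T2[of k] T3[of k] by simp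
    moreover have "alphalo * (phi r F C (x k) - philb r F C) \<le> alpha k * (phi r F C (x k) - philb r F C)"
      using A6 True by (simp add: mult_right_mono)
    ultimately have "alphalo * (phi r F C (x k) - philb r F C) \<le> q k" by linarith
    then have "phi r F C (x k) - philb r F C \<le> q k / alphalo" using A6(1) by (simp add: le_divide_eq mult.commute)
    then show ?thesis using phixb by simp
  next
    case False
    have "0 \<le> q k / alphalo" using qnn[of k] A6(1) by simp
    then show ?thesis using phixb False by linarith
  qed
  have comp_le: "r $ j * (F l $ j - zstar F C j) \<le> phi r F C xb" for j
  proof (rule LIMSEQ_le)
    show "(\<lambda>k. r $ j * (F (x (s k)) $ j - zstar F C j)) \<longlonglongrightarrow> r $ j * (F l $ j - zstar F C j)"
      by (intro tendsto_intros Fxs)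
    show "(\<lambda>k. phi r F C xb + q (s k) / alphalo) \<longlonglongrightarrow> phi r F C xb"
      using tendsto_add[OF tendsto_const tendsto_divide_zero[OF qs, of alphalo]] by simp
    show "\<exists>N. \<forall>n\<ge>N. r $ j * (F (x (s n)) $ j - zstar F C j) \<le> phi r F C xb + q (s n) / alphalo"
      using phige phiq order_trans by blast
  qed
  have phil: "phi r F C l \<le> phi r F C xb"
    unfolding phi_def[of r F C l] using comp_le by (auto intro!: Max.boundedI)
  have zle: "zstar F C j \<le> F y $ j" if "y \<in> C" for y j
    unfolding zstar_def using A2_z that by (intro cInf_lower) auto
  have phinn: "0 \<le> phi r F C y" if "y \<in> C" for y
  proof -
    obtain j :: 'm where True by simp
    have "0 \<le> r $ j * (F y $ j - zstar F C j)" using zle[OF that, of j] r_pos by (simp add: less_imp_le)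
    then show ?thesis using phige order_trans by blast
  qed
  have feasC: "y \<in> C" if "y \<in> feas F C Q" for y
    using that A2_C unfolding feas_def Hfun_def by (simp add: in_closed_iff_infdist_zero)
  have "phistar r F C Q \<le> phi r F C l"
    unfolding phistar_def
    by (rule cInf_lower) (use lfeas feasC phinn in \<open>auto intro!: bdd_belowI[where m = 0]\<close>)
  then have "phi r F C l = phistar r F C Q" using phil phixb A7 by simp
  then have "l \<in> Omega r F C Q" unfolding Omega_def using lfeas by simp
  then show ?thesis using smono xs by (auto simp: o_def)
qed

end
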